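(* Let $\alpha_1,\alpha_2>0$ satisfy $\alpha_1-\alpha_2\ge e^2$. Let $p$ be analytic in $\mathbb{D}$ with $p(0)=1$. If $$1+\alpha_1 zp'(z)+\alpha_2 z^2p''(z)\prec 1+ze^z,$$ then $p(z)\prec e^z$.
   Context: $\mathbb{D}$ is the open unit disk. For $g,h$ analytic in $\mathbb{D}$, $g\prec h$ means there is an analytic $w:\mathbb{D}\to\mathbb{D}$ with $w(0)=0$ and $g=h\circ w$. *)

theory Defs
  imports "HOL-Complex_Analysis.Complex_Analysis"
begin

definition subordinate :: "(complex \<Rightarrow> complex) \<Rightarrow> (complex \<Rightarrow> complex) \<Rightarrow> bool"
  (infix "\<prec>\<^sub>D" 50) where
  "g \<prec>\<^sub>D h \<longleftrightarrow> (\<exists>w. w holomorphic_on ball 0 1 \<and> w ` ball 0 1 \<subseteq> ball 0 1 \<and> w 0 = 0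
      \<and> (\<forall>z\<in>ball 0 1. g z = h (w z)))"

end

theory Submission
  imports Defs
begin

lemma radial_bound:
  fixes a1 a2 :: real and D D2 :: "complex \<Rightarrow> complex" and z :: complex
  assumes a1: "a1 > 0" and a2: "a2 > 0" and z: "norm z < 1"
    and dD: "\<And>\<zeta>. \<zeta> \<in> ball 0 1 \<Longrightarrow> (D has_field_derivative D2 \<zeta>) (at \<zeta>)"
    and bL: "\<And>\<zeta>. \<zeta> \<in> ball 0 1 \<Longrightarrow>
        norm (of_real a1 * \<zeta> * D \<zeta> + of_real a2 * \<zeta>\<^sup>2 * D2 \<zeta>) \<le> exp 1 * norm \<zeta>"
  shows "norm (z * D z) \<le> exp 1 * norm z / a1"
proof -
  define g where "g = a1 / a2"
  have g: "g > 0" using a1 a2 by (simp add: g_def)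
  define C where "C = exp 1 * norm z / a1"
  define f where "f = (\<lambda>s::real. (s powr g) *\<^sub>R (z * D (of_real s * z)))"
  define \<phi> where "\<phi> = (\<lambda>s::real. C * s powr g)"
  have inball: "of_real s * z \<in> ball 0 1" if "s \<in> {0..1}" for s
  proof -
    have "norm (of_real s * z) = \<bar>s\<bar> * norm z" by (simp add: norm_mult)
    also have "\<dots> \<le> norm z" using that by (simp add: mult_left_le_one_le)
    finally show ?thesis using z by simp
  qed
  have contD: "continuous_on (ball 0 1) D"
    using dD by (meson DERIV_isCont continuous_at_imp_continuous_on)
  have cD: "continuous_on {0..1} (\<lambda>s::real. D (of_real s * z))"
    by (rule continuous_on_compose2[OF contD]) (auto intro!: continuous_intros inball)
  have cf: "continuous_on {0..1} f"
    unfolding f_def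
    by (intro continuous_intros continuous_on_powr' cD) (use g in auto)
  have cphi: "continuous_on {0..1} \<phi>"
    unfolding \<phi>_def
    by (intro continuous_intros continuous_on_powr') (use g in auto)
  define f' where "f' = (\<lambda>s::real. (s powr g) *\<^sub>R (z * (D2 (of_real s * z) * z))
       + (g * s powr (g - 1)) *\<^sub>R (z * D (of_real s * z)))"
  define \<phi>' where "\<phi>' = (\<lambda>s::real. C * (g * s powr (g - 1)))"
  have df: "(f has_vector_derivative f' s) (at s)" if s: "0 < s" "s < 1" for s
  proof -
    have sb: "of_real s * z \<in> ball 0 1" using inball s by auto
    have lin: "((\<lambda>\<zeta>. \<zeta> * z) has_field_derivative z) (at (of_real s))"
      by (auto intro!: derivative_eq_intros)
    have "((\<lambda>\<zeta>. D (\<zeta> * z)) has_field_derivative D2 (of_real s * z) * z) (at (of_real s))"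
      using DERIV_chain2[where g="\<lambda>\<zeta>. \<zeta> * z" and x="of_real s", OF dD[OF sb], of z UNIV, OF lin] .
    then have "((\<lambda>\<zeta>. z * D (\<zeta> * z)) has_field_derivative z * (D2 (of_real s * z) * z)) (at (of_real s))"
      by (auto intro!: derivative_eq_intros)
    then have "((\<lambda>x. z * D (of_real x * z)) has_vector_derivative z * (D2 (of_real s * z) * z)) (at s)"
      by (rule has_vector_derivative_real_field)
    then show ?thesis
      unfolding f_def f'_def
      by (rule has_vector_derivative_scaleR[OF has_real_derivative_powr[OF s(1)]])
  qed
  have dphi: "(\<phi> has_vector_derivative \<phi>' s) (at s)" if s: "0 < s" "s < 1" for s
    unfolding \<phi>_def \<phi>'_def has_real_derivative_iff_has_vector_derivative[symmetric]
    by (rule DERIV_cmult[OF has_real_derivative_powr[OF s(1)]])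
  have bnd: "norm (f' s) \<le> \<phi>' s" if s: "0 < s" "s < 1" for s
  proof -
    have sb: "of_real s * z \<in> ball 0 1" using inball s by auto
    define a where "a = s powr (g - 2)"
    have a: "a > 0" using s by (simp add: a_def)
    have e1: "s powr g = a * s^2"
      using powr_add[of s "g - 2" 2] s by (simp add: a_def)
    have e2: "s powr (g - 1) = a * s"
      using powr_add[of s "g - 2" 1] s by (simp add: a_def)
    have eq: "f' s = (a / a2) *\<^sub>R (of_real a1 * (of_real s * z) * D (of_real s * z)
          + of_real a2 * (of_real s * z)\<^sup>2 * D2 (of_real s * z))"
    proof -
      have "f' s = (a * s^2) *\<^sub>R (z * (D2 (of_real s * z) * z))
         + (g * (a * s)) *\<^sub>R (z * D (of_real s * z))"
        unfolding f'_def by (simp only: e1 e2)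
      then show ?thesis using a2 unfolding g_def
        by (simp add: scaleR_conv_of_real field_simps power2_eq_square)
    qed
    have "norm (f' s) = (a / a2) * norm (of_real a1 * (of_real s * z) * D (of_real s * z)
          + of_real a2 * (of_real s * z)\<^sup>2 * D2 (of_real s * z))"
      unfolding eq using a a2 by simp
    also have "\<dots> \<le> (a / a2) * (exp 1 * norm (of_real s * z))"
      by (rule mult_left_mono[OF bL[OF sb]]) (use a a2 in simp)
    also have "\<dots> = C * (g * (a * s))"
      unfolding C_def g_def using s a1 a2 by (simp add: norm_mult field_simps)
    also have "\<dots> = \<phi>' s" unfolding \<phi>'_def by (simp only: e2)
    finally show ?thesis .
  qed
  have "norm (f 1 - f 0) \<le> \<phi> 1 - \<phi> 0"
    by (rule differentiable_bound_general[OF zero_less_one cf cphi df dphi bnd])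
  then show ?thesis using g by (simp add: f_def \<phi>_def C_def)
qed

theorem theorem4p8:
  fixes \<alpha>1 \<alpha>2 :: real and p :: "complex \<Rightarrow> complex"
  assumes "\<alpha>1 > 0" and "\<alpha>2 > 0" and "\<alpha>1 - \<alpha>2 \<ge> exp 2"
    and "p holomorphic_on ball 0 1" and "p 0 = 1"
    and "(\<lambda>z. 1 + of_real \<alpha>1 * z * deriv p z + of_real \<alpha>2 * z\<^sup>2 * deriv (deriv p) z)
           \<prec>\<^sub>D (\<lambda>z. 1 + z * exp z)"
  shows "p \<prec>\<^sub>D exp"
proof -
  note a1 = assms(1) and a2 = assms(2) and hol = assms(4)
  obtain w where wh: "w holomorphic_on ball 0 1" and wb: "w ` ball 0 1 \<subseteq> ball 0 1"
    and w0: "w 0 = 0"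
    and weq: "\<And>z. z \<in> ball 0 1 \<Longrightarrow> 1 + of_real \<alpha>1 * z * deriv p z + of_real \<alpha>2 * z\<^sup>2 * deriv (deriv p) z
        = 1 + w z * exp (w z)"
    using assms(6) unfolding subordinate_def by blast
  define D where "D = deriv p"
  define D2 where "D2 = deriv (deriv p)"
  have wn: "norm (w z) < 1" if "norm z < 1" for z using wb that by (auto simp: subset_iff)
  have schw: "norm (w z) \<le> norm z" if "norm z < 1" for z
    by (rule Schwarz_Lemma(1)[OF wh w0 wn that])
  have Dh: "D holomorphic_on ball 0 1" unfolding D_def by (rule holomorphic_deriv[OF hol open_ball])
  have dD: "(D has_field_derivative D2 \<zeta>) (at \<zeta>)" if "\<zeta> \<in> ball 0 1" for \<zeta>
    unfolding D2_def D_def[symmetric] by (rule holomorphic_derivI[OF Dh open_ball that])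
  have bL: "norm (of_real \<alpha>1 * \<zeta> * D \<zeta> + of_real \<alpha>2 * \<zeta>\<^sup>2 * D2 \<zeta>) \<le> exp 1 * norm \<zeta>"
    if z: "\<zeta> \<in> ball 0 1" for \<zeta>
  proof -
    have "of_real \<alpha>1 * \<zeta> * D \<zeta> + of_real \<alpha>2 * \<zeta>\<^sup>2 * D2 \<zeta> = w \<zeta> * exp (w \<zeta>)"
      using weq[OF z] unfolding D_def D2_def by simp
    also have "norm \<dots> = norm (w \<zeta>) * exp (Re (w \<zeta>))" by (simp add: norm_mult norm_exp_eq_Re)
    also have "\<dots> \<le> norm \<zeta> * exp 1"
    proof (rule mult_mono)
      show "norm (w \<zeta>) \<le> norm \<zeta>" using schw z by simp
      have "Re (w \<zeta>) \<le> 1" using complex_Re_le_cmod[of "w \<zeta>"] wn[of \<zeta>] z by simp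
      then show "exp (Re (w \<zeta>)) \<le> exp 1" by simp
    qed auto
    finally show ?thesis by (simp add: mult.commute)
  qed
  define B where "B = exp 1 / \<alpha>1"
  have Bnz: "norm (D \<zeta>) \<le> B" if "\<zeta> \<in> ball 0 1" "\<zeta> \<noteq> 0" for \<zeta>
  proof -
    have "norm (\<zeta> * D \<zeta>) \<le> exp 1 * norm \<zeta> / \<alpha>1"
      by (rule radial_bound[OF a1 a2 _ dD bL]) (use that in auto)
    then have "norm \<zeta> * norm (D \<zeta>) \<le> norm \<zeta> * B"
      by (simp add: norm_mult B_def mult.commute)
    then show ?thesis using that by simp
  qed
  have Bb: "norm (D \<zeta>) \<le> B" if "\<zeta> \<in> ball 0 1" for \<zeta>
  proof (cases "\<zeta> = 0")
    case False then show ?thesis using Bnz that by blast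
  next
    case True
    have "isCont D 0" using dD[of 0] DERIV_isCont by simp
    then have "((\<lambda>x. norm (D x)) \<longlongrightarrow> norm (D 0)) (at 0)"
      by (intro tendsto_norm) (simp add: isCont_def)
    moreover have "eventually (\<lambda>x. norm (D x) \<le> B) (at 0)"
      unfolding eventually_at by (rule exI[of _ 1]) (auto intro!: Bnz simp: dist_norm)
    ultimately have "norm (D 0) \<le> B"
      by (rule tendsto_upperbound) simp
    then show ?thesis using True by simp
  qed
  have e2: "exp 2 = exp 1 * exp (1::real)"
    using exp_add[of "1::real" 1] by simp
  have e_ge: "exp (1::real) \<ge> 2" using exp_ge_add_one_self[of "1::real"] by simp
  have "exp 1 * exp 1 \<le> \<alpha>1" using assms(3) a2 e2 by linarith
  then have "B \<le> exp 1 / (exp 1 * exp 1)"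
    unfolding B_def by (rule divide_left_mono) (use a1 in auto)
  also have "\<dots> = 1 / exp 1" by simp
  also have "\<dots> \<le> 1 / 2" using e_ge by (intro divide_left_mono) auto
  finally have Ble: "B \<le> 1 / 2" .
  have pz: "norm (p z - 1) < 1 / 2" if z: "z \<in> ball 0 1" for z
  proof -
    have "norm (p z - p 0) \<le> B * norm (z - 0)"
    proof (rule field_differentiable_bound[of "ball 0 1" p D B])
      show "(p has_field_derivative D x) (at x within ball 0 1)" if "x \<in> ball 0 1" for x
        unfolding D_def by (rule holomorphic_derivI[OF hol open_ball that])
    qed (use Bb z in auto)
    also have "\<dots> \<le> 1 / 2 * norm z"
      using mult_right_mono[OF Ble norm_ge_zero[of z]] by simp
    also have "\<dots> < 1 / 2" using z by simp
    finally show ?thesis using assms(5) by simp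
  qed
  have Rep: "Re (p z) > 0" if "z \<in> ball 0 1" for z
  proof -
    have "Re (1 - p z) \<le> norm (1 - p z)" by (rule complex_Re_le_cmod)
    moreover have "norm (1 - p z) < 1 / 2" using pz[OF that] by (simp add: norm_minus_commute)
    ultimately show ?thesis by simp
  qed
  show ?thesis unfolding subordinate_def
  proof (intro exI[of _ "\<lambda>z. Ln (p z)"] conjI ballI)
    show "(\<lambda>z. Ln (p z)) holomorphic_on ball 0 1"
      by (rule holomorphic_on_Ln'[OF _ hol]) (use Rep in \<open>fastforce simp: complex_nonpos_Reals_iff\<close>)
    show "Ln (p 0) = 0" using assms(5) by simp
    show "p z = exp (Ln (p z))" if "z \<in> ball 0 1" for z
      using Rep[OF that] by (subst exp_Ln) auto
    show "(\<lambda>z. Ln (p z)) ` ball 0 1 \<subseteq> ball 0 1"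
    proof safe
      fix z :: complex assume z: "z \<in> ball 0 1"
      define u where "u = p z - 1"
      define r where "r = norm u"
      have r: "r < 1 / 2" "r \<ge> 0" using pz[OF z] by (auto simp: r_def u_def)
      have "norm (ln (1 + u) - u) \<le> r^2 / (1 - r)"
        unfolding r_def by (rule Ln_approx_linear) (use r in \<open>simp add: r_def\<close>)
      then have "norm (ln (1 + u)) \<le> r + r^2 / (1 - r)"
        using norm_triangle_ineq[of "ln (1 + u) - u" u] unfolding r_def by simp
      also have "\<dots> < 1"
        using r by (simp add: field_simps power2_eq_square)
      finally show "Ln (p z) \<in> ball 0 1" by (simp add: u_def)
    qed
  qed
qed

end
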